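(* Let $\epsilon<1/2$, $S\subseteq\{0,1\}^n$ and $f:S\to\{0,1\}$. If $f$ is $\epsilon$-approximated by functions $\{f_j\}_{j\in J}$ with $\mathsf{sumPI}(f_j)\le s$ for every $j\in J$, then $\mathsf{sumPI}(f)\le s/(1-2\epsilon)$.
   Context: $f$ is $\epsilon$-approximated by $\{f_j\}_{j\in J}$, $f_j:S\to\{0,1\}$, if there is a probability distribution $\alpha$ on $J$ such that for every $x\in S$, $\Pr_{j\sim\alpha}[f(x)=f_j(x)]\ge1-\epsilon$. For $g:S\to\{0,1\}$, with $p=\{p_x:x\in S\}$ ranging over families of probability distributions on $[n]$, $$\mathsf{sumPI}(g)=\min_{p}\ \max_{x,y\in S:\ g(x)\neq g(y)} \frac{1}{\sum_{i:\,x_i\neq y_i}\sqrt{p_x(i)p_y(i)}}.$$ *)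

theory Defs
  imports "HOL-Probability.Probability"
begin

text \<open>Points of {0,1}^n are boolean lists of length n; coordinates are indexed by {0..<n}.
  Boolean functions S -> {0,1} are total functions bool list => bool, only their values on S matter.\<close>

definition prob_family :: "nat \<Rightarrow> bool list set \<Rightarrow> (bool list \<Rightarrow> nat \<Rightarrow> real) \<Rightarrow> bool" where
  "prob_family n S p \<longleftrightarrow>
     (\<forall>x\<in>S. (\<forall>i<n. 0 \<le> p x i) \<and> (\<Sum>i<n. p x i) = 1)"

definition pair_cost :: "nat \<Rightarrow> (bool list \<Rightarrow> nat \<Rightarrow> real) \<Rightarrow> bool list \<Rightarrow> bool list \<Rightarrow> ereal" where
  "pair_cost n p x y =
     (let t = (\<Sum>i\<in>{i. i < n \<and> x ! i \<noteq> y ! i}. sqrt (p x i * p y i))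
      in if t = 0 then \<infinity> else ereal (1 / t))"

text \<open>sumPI(g) = min over p of max over x,y in S with g x ~= g y of pair_cost.
  The maximum over an empty set of pairs is taken to be 0.\<close>
definition sumPI :: "nat \<Rightarrow> bool list set \<Rightarrow> (bool list \<Rightarrow> bool) \<Rightarrow> ereal" where
  "sumPI n S g =
     (INF p \<in> {p. prob_family n S p}.
        Sup (insert 0 {pair_cost n p x y | x y. x \<in> S \<and> y \<in> S \<and> g x \<noteq> g y}))"

definition eps_approx :: "real \<Rightarrow> bool list set \<Rightarrow> (bool list \<Rightarrow> bool) \<Rightarrow> 'j set
    \<Rightarrow> ('j \<Rightarrow> bool list \<Rightarrow> bool) \<Rightarrow> bool" where
  "eps_approx eps S f J F \<longleftrightarrow>
     (\<exists>\<alpha> :: 'j pmf. set_pmf \<alpha> \<subseteq> J \<and>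
        (\<forall>x\<in>S. measure_pmf.prob \<alpha> {j. f x = F j x} \<ge> 1 - eps))"

end

theory Submission
  imports Defs
begin

lemma pmf_integrable_bdd:
  fixes M :: "'j pmf" and a :: "'j \<Rightarrow> real"
  assumes "\<And>j. 0 \<le> a j" "\<And>j. a j \<le> B"
  shows "integrable (measure_pmf M) a"
  by (rule measure_pmf.integrable_const_bound[where B=B]) (use assms in auto)

lemma sqrt_amgm:
  fixes a b t :: real
  assumes "0 \<le> a" "0 \<le> b" "0 < t"
  shows "sqrt (a * b) \<le> (t * a + b / t) / 2"
proof -
  have e: "sqrt (a * b) = sqrt (t * a) * sqrt (b / t)"
    using assms by (simp add: real_sqrt_mult[symmetric])
  have "0 \<le> (sqrt (t * a) - sqrt (b / t))^2" by simp
  also have "\<dots> = t * a + b / t - 2 * (sqrt (t * a) * sqrt (b / t))"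
    using assms by (simp add: power2_diff)
  finally show ?thesis using e by simp
qed

lemma pmf_sqrt_ineq:
  fixes M :: "'j pmf" and a b :: "'j \<Rightarrow> real"
  assumes a0: "\<And>j. 0 \<le> a j" and a1: "\<And>j. a j \<le> 1"
    and b0: "\<And>j. 0 \<le> b j" and b1: "\<And>j. b j \<le> 1"
  shows "measure_pmf.expectation M (\<lambda>j. sqrt (a j * b j))
    \<le> sqrt (measure_pmf.expectation M a * measure_pmf.expectation M b)"
proof -
  define A where "A = measure_pmf.expectation M a"
  define B where "B = measure_pmf.expectation M b"
  define E where "E = measure_pmf.expectation M (\<lambda>j. sqrt (a j * b j))"
  have ia: "integrable (measure_pmf M) a" by (rule pmf_integrable_bdd[where B=1]) (use a0 a1 in auto)
  have ib: "integrable (measure_pmf M) b" by (rule pmf_integrable_bdd[where B=1]) (use b0 b1 in auto)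
  have ic: "integrable (measure_pmf M) (\<lambda>j. sqrt (a j * b j))"
    by (rule pmf_integrable_bdd[where B=1]) (use a0 a1 b0 b1 in \<open>auto simp: mult_le_one\<close>)
  have A0: "0 \<le> A" unfolding A_def by (rule integral_nonneg_AE) (use a0 in auto)
  have B0: "0 \<le> B" unfolding B_def by (rule integral_nonneg_AE) (use b0 in auto)
  have key: "E \<le> (t * A + B / t) / 2" if t: "t > 0" for t
  proof -
    have "E \<le> measure_pmf.expectation M (\<lambda>j. (t * a j + b j / t) / 2)"
      unfolding E_def
      by (rule integral_mono) (use ic ia ib sqrt_amgm a0 b0 t in auto)
    also have "\<dots> = (t * A + B / t) / 2"
      unfolding A_def B_def using ia ib by simp
    finally show ?thesis .
  qed
  show ?thesis
  proof (cases "A > 0 \<and> B > 0")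
    case True
    define t where "t = sqrt B / sqrt A"
    have "t > 0" using True by (simp add: t_def)
    have sA: "sqrt A * sqrt A = A" "sqrt A > 0" using True by simp_all
    have sB: "sqrt B * sqrt B = B" "sqrt B > 0" using True by simp_all
    moreover have "t * A = sqrt B * sqrt A"
      unfolding t_def using sA by (metis nonzero_mult_div_cancel_left less_irrefl times_divide_eq_left mult.assoc mult.commute)
    moreover have "B / t = sqrt B * sqrt A"
      unfolding t_def using sA sB by (simp add: field_simps)
    ultimately have "E \<le> sqrt A * sqrt B" using key[of t] \<open>t > 0\<close> by (simp add: mult.commute)
    then show ?thesis by (simp add: A_def B_def E_def real_sqrt_mult)
  next
    case False
    then have z: "A = 0 \<or> B = 0" using A0 B0 by auto
    have "E \<le> 0"
    proof (rule ccontr)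
      assume "\<not> E \<le> 0"
      then have Ep: "E > 0" by simp
      show False using z
      proof
        assume "A = 0"
        define t where "t = (B + 1) / E"
        have tp: "t > 0" using Ep B0 by (simp add: t_def)
        have "E \<le> B / t / 2" using key[OF tp] \<open>A = 0\<close> by simp
        also have "B / t / 2 = B * E / (2 * (B + 1))" using Ep B0 by (simp add: t_def field_simps)
        also have "\<dots> < E" using Ep B0 by (simp add: field_simps) (smt (verit) mult_nonneg_nonneg)
        finally show False by simp
      next
        assume "B = 0"
        define t where "t = E / (A + 1)"
        have tp: "t > 0" using Ep A0 by (simp add: t_def)
        have "E \<le> t * A / 2" using key[OF tp] \<open>B = 0\<close> by simp
        also have "t * A / 2 = A * E / (2 * (A + 1))" using Ep A0 by (simp add: t_def field_simps)
        also have "\<dots> < E" using Ep A0 by (simp add: field_simps) (smt (verit) mult_nonneg_nonneg)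
        finally show False by simp
      qed
    qed
    then show ?thesis using z by (auto simp: A_def[symmetric] B_def[symmetric] E_def[symmetric])
  qed
qed


lemma sumPI_nonneg: "0 \<le> sumPI n S g"
  unfolding sumPI_def by (rule INF_greatest) (rule Sup_upper, simp)

lemma main_delta:
  fixes n :: nat and S :: "bool list set" and f :: "bool list \<Rightarrow> bool"
    and J :: "'j set" and F :: "'j \<Rightarrow> bool list \<Rightarrow> bool" and eps c :: real
    and \<alpha> :: "'j pmf" and P :: "'j \<Rightarrow> bool list \<Rightarrow> nat \<Rightarrow> real"
  assumes eps: "eps < 1/2" and cpos: "0 < c"
    and aJ: "set_pmf \<alpha> \<subseteq> J"
    and ap: "\<forall>x\<in>S. measure_pmf.prob \<alpha> {j. f x = F j x} \<ge> 1 - eps"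
    and P: "\<forall>j\<in>J. prob_family n S (P j) \<and>
       Sup (insert 0 {pair_cost n (P j) x y | x y. x \<in> S \<and> y \<in> S \<and> F j x \<noteq> F j y}) < ereal c"
  shows "sumPI n S f \<le> ereal (c / (1 - 2 * eps))"
proof -
  define q where "q j x i = (if j \<in> J \<and> x \<in> S \<and> i < n then P j x i else 0)" for j x i
  have q0: "0 \<le> q j x i" for j x i
    using P unfolding q_def prob_family_def by auto
  have q1: "q j x i \<le> 1" for j x i
  proof (cases "j \<in> J \<and> x \<in> S \<and> i < n")
    case True
    then have pf: "\<forall>i<n. 0 \<le> P j x i" "(\<Sum>i<n. P j x i) = 1" using P unfolding prob_family_def by auto
    have "P j x i \<le> (\<Sum>i<n. P j x i)"
      by (rule member_le_sum) (use True pf in auto)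
    then show ?thesis using True pf by (simp add: q_def)
  qed (auto simp: q_def)
  have iq: "integrable (measure_pmf \<alpha>) (\<lambda>j. q j x i)" for x i
    by (rule pmf_integrable_bdd[where B=1]) (use q0 q1 in auto)
  define p where "p x i = measure_pmf.expectation \<alpha> (\<lambda>j. q j x i)" for x i
  have pf: "prob_family n S p"
    unfolding prob_family_def
  proof (intro ballI conjI allI impI)
    fix x i assume "x \<in> S" "i < n"
    show "0 \<le> p x i" unfolding p_def by (rule integral_nonneg_AE) (use q0 in auto)
  next
    fix x assume x: "x \<in> S"
    have "(\<Sum>i<n. p x i) = measure_pmf.expectation \<alpha> (\<lambda>j. \<Sum>i<n. q j x i)"
      unfolding p_def by (rule Bochner_Integration.integral_sum[symmetric]) (use iq in auto)
    also have "\<dots> = measure_pmf.expectation \<alpha> (\<lambda>j. 1)"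
    proof (rule integral_cong_AE)
      show "AE j in measure_pmf \<alpha>. (\<Sum>i<n. q j x i) = 1"
        unfolding AE_measure_pmf_iff
      proof
        fix j assume "j \<in> set_pmf \<alpha>"
        then have "j \<in> J" using aJ by auto
        then show "(\<Sum>i<n. q j x i) = 1" using P x unfolding q_def prob_family_def by auto
      qed
    qed auto
    finally show "(\<Sum>i<n. p x i) = 1" by simp
  qed
  have pc: "pair_cost n p x y \<le> ereal (c / (1 - 2 * eps))"
    if x: "x \<in> S" and y: "y \<in> S" and fxy: "f x \<noteq> f y" for x y
  proof -
    define D where "D = {i. i < n \<and> x ! i \<noteq> y ! i}"
    have fD: "finite D" unfolding D_def by auto
    define tj where "tj j = (\<Sum>i\<in>D. sqrt (q j x i * q j y i))" for j
    define Q where "Q = {j. F j x \<noteq> F j y}"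
    have step1: "indicator Q j / c \<le> tj j" if j: "j \<in> set_pmf \<alpha>" for j
    proof (cases "j \<in> Q")
      case True
      have jJ: "j \<in> J" using j aJ by auto
      define t where "t = (\<Sum>i\<in>{i. i < n \<and> x ! i \<noteq> y ! i}. sqrt (P j x i * P j y i))"
      have ttj: "tj j = t" unfolding tj_def t_def D_def q_def using jJ x y by simp
      have "pair_cost n (P j) x y \<le> Sup (insert 0 {pair_cost n (P j) x y | x y. x \<in> S \<and> y \<in> S \<and> F j x \<noteq> F j y})"
        by (rule Sup_upper) (use x y True Q_def in auto)
      also have "\<dots> < ereal c" using P jJ by auto
      finally have lt: "pair_cost n (P j) x y < ereal c" .
      have t0: "0 \<le> t" unfolding t_def
        by (rule sum_nonneg) (use P jJ x y in \<open>auto simp: prob_family_def\<close>)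
      have tn0: "t \<noteq> 0" using lt unfolding pair_cost_def t_def[symmetric] by (auto simp: Let_def)
      then have "1 / t < c" using lt unfolding pair_cost_def t_def[symmetric] by (auto simp: Let_def)
      then have "1 / c < t" using t0 tn0 cpos by (simp add: field_simps)
      then show ?thesis using True ttj by simp
    next
      case False
      have "0 \<le> tj j" unfolding tj_def by (rule sum_nonneg) (use q0 in auto)
      then show ?thesis using False by simp
    qed
    have iQ: "integrable (measure_pmf \<alpha>) (\<lambda>j. indicator Q j / c)"
      by (rule pmf_integrable_bdd[where B="1/c"]) (use cpos in \<open>auto simp: indicator_def\<close>)
    have itj: "integrable (measure_pmf \<alpha>) tj"
      unfolding tj_def
      by (rule Bochner_Integration.integrable_sum, rule pmf_integrable_bdd[where B=1]) (use q0 q1 in \<open>auto simp: mult_le_one\<close>)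
    have step2: "measure_pmf.prob \<alpha> Q / c \<le> measure_pmf.expectation \<alpha> tj"
    proof -
      have "measure_pmf.expectation \<alpha> (\<lambda>j. indicator Q j / c) \<le> measure_pmf.expectation \<alpha> tj"
        by (rule integral_mono_AE) (use iQ itj step1 in \<open>auto simp: AE_measure_pmf_iff\<close>)
      moreover have "measure_pmf.expectation \<alpha> (\<lambda>j. indicator Q j / c) = measure_pmf.prob \<alpha> Q / c"
        by simp
      ultimately show ?thesis by simp
    qed
    have step3: "1 - 2 * eps \<le> measure_pmf.prob \<alpha> Q"
    proof -
      define A where "A = {j. f x = F j x}"
      define B where "B = {j. f y = F j y}"
      have "A \<inter> B \<subseteq> Q" using fxy unfolding A_def B_def Q_def by auto
      then have "measure_pmf.prob \<alpha> (A \<inter> B) \<le> measure_pmf.prob \<alpha> Q"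
        by (simp add: measure_pmf.finite_measure_mono)
      moreover have "measure_pmf.prob \<alpha> (A \<union> B) = measure_pmf.prob \<alpha> A + measure_pmf.prob \<alpha> B - measure_pmf.prob \<alpha> (A \<inter> B)"
        by (rule measure_Un3) (auto simp: fmeasurable_def less_top[symmetric] measure_pmf.emeasure_finite)
      moreover have "measure_pmf.prob \<alpha> (A \<union> B) \<le> 1" by (rule measure_pmf.prob_le_1)
      moreover have "measure_pmf.prob \<alpha> A \<ge> 1 - eps" "measure_pmf.prob \<alpha> B \<ge> 1 - eps"
        using ap x y unfolding A_def B_def by auto
      ultimately show ?thesis by linarith
    qed
    define T where "T = (\<Sum>i\<in>D. sqrt (p x i * p y i))"
    have step4: "measure_pmf.expectation \<alpha> tj \<le> T"
    proof -
      have "measure_pmf.expectation \<alpha> tj = (\<Sum>i\<in>D. measure_pmf.expectation \<alpha> (\<lambda>j. sqrt (q j x i * q j y i)))"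
        unfolding tj_def
        by (rule Bochner_Integration.integral_sum, rule pmf_integrable_bdd[where B=1]) (use q0 q1 in \<open>auto simp: mult_le_one\<close>)
      also have "\<dots> \<le> T" unfolding T_def p_def
        by (rule sum_mono, rule pmf_sqrt_ineq) (use q0 q1 in auto)
      finally show ?thesis .
    qed
    have e12: "0 < 1 - 2 * eps" using eps by simp
    have "(1 - 2 * eps) / c \<le> measure_pmf.prob \<alpha> Q / c"
      using step3 cpos by (simp add: divide_right_mono)
    then have Tge: "(1 - 2 * eps) / c \<le> T" using step2 step4 by linarith
    have Tpos: "0 < T" using Tge e12 cpos
      by (smt (verit) divide_pos_pos)
    have "pair_cost n p x y = ereal (1 / T)"
      unfolding pair_cost_def T_def D_def using Tpos by (simp add: T_def D_def Let_def)
    also have "1 / T \<le> c / (1 - 2 * eps)"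
      using Tge Tpos e12 cpos by (simp add: field_simps)
    finally show ?thesis by simp
  qed
  have "sumPI n S f \<le> Sup (insert 0 {pair_cost n p x y | x y. x \<in> S \<and> y \<in> S \<and> f x \<noteq> f y})"
    unfolding sumPI_def by (rule INF_lower) (use pf in simp)
  also have "\<dots> \<le> ereal (c / (1 - 2 * eps))"
  proof (rule Sup_least)
    fix z assume "z \<in> insert 0 {pair_cost n p x y | x y. x \<in> S \<and> y \<in> S \<and> f x \<noteq> f y}"
    then show "z \<le> ereal (c / (1 - 2 * eps))"
      using pc cpos eps by auto
  qed
  finally show ?thesis .
qed


theorem mainTheorem8:
  fixes n :: nat and S :: "bool list set" and f :: "bool list \<Rightarrow> bool"
    and J :: "'j set" and F :: "'j \<Rightarrow> bool list \<Rightarrow> bool" and eps s :: real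
  assumes "eps < 1/2"
    and "S \<subseteq> {x. length x = n}"
    and "eps_approx eps S f J F"
    and "\<forall>j\<in>J. sumPI n S (F j) \<le> ereal s"
  shows "sumPI n S f \<le> ereal (s / (1 - 2 * eps))"
proof -
  from assms(3) obtain \<alpha> :: "'j pmf" where aJ: "set_pmf \<alpha> \<subseteq> J"
    and ap: "\<forall>x\<in>S. measure_pmf.prob \<alpha> {j. f x = F j x} \<ge> 1 - eps"
    unfolding eps_approx_def by blast
  obtain j0 where "j0 \<in> set_pmf \<alpha>" using set_pmf_not_empty by fast
  then have "j0 \<in> J" using aJ by auto
  then have "0 \<le> ereal s" using assms(4) sumPI_nonneg[of n S "F j0"] by (meson order_trans)
  then have s0: "0 \<le> s" by simp
  have e12: "0 < 1 - 2 * eps" using assms(1) by simp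
  have main: "sumPI n S f \<le> ereal ((s + d) / (1 - 2 * eps))" if d: "d > 0" for d
  proof -
    define c where "c = s + d"
    have cpos: "0 < c" using s0 d by (simp add: c_def)
    have "\<forall>j\<in>J. \<exists>p. prob_family n S p \<and>
       Sup (insert 0 {pair_cost n p x y | x y. x \<in> S \<and> y \<in> S \<and> F j x \<noteq> F j y}) < ereal c"
    proof
      fix j assume "j \<in> J"
      then have "sumPI n S (F j) \<le> ereal s" using assms(4) by auto
      also have "ereal s < ereal c" using d c_def by simp
      finally have "sumPI n S (F j) < ereal c" .
      then show "\<exists>p. prob_family n S p \<and>
         Sup (insert 0 {pair_cost n p x y | x y. x \<in> S \<and> y \<in> S \<and> F j x \<noteq> F j y}) < ereal c"
        unfolding sumPI_def INF_less_iff by auto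
    qed
    then have "\<exists>P. \<forall>j\<in>J. prob_family n S (P j) \<and>
       Sup (insert 0 {pair_cost n (P j) x y | x y. x \<in> S \<and> y \<in> S \<and> F j x \<noteq> F j y}) < ereal c"
      by (rule bchoice)
    then obtain P where P: "\<forall>j\<in>J. prob_family n S (P j) \<and>
       Sup (insert 0 {pair_cost n (P j) x y | x y. x \<in> S \<and> y \<in> S \<and> F j x \<noteq> F j y}) < ereal c"
      by (elim exE)
    show ?thesis unfolding c_def[symmetric]
      by (rule main_delta[OF assms(1) cpos aJ ap P])
  qed
  show ?thesis
  proof (rule ereal_le_epsilon2)
    fix e :: real assume e: "0 < e"
    have "sumPI n S f \<le> ereal ((s + e * (1 - 2 * eps)) / (1 - 2 * eps))"
      by (rule main) (use e e12 in simp)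
    also have "(s + e * (1 - 2 * eps)) / (1 - 2 * eps) = s / (1 - 2 * eps) + e"
      using e12 by (simp add: field_simps)
    finally show "sumPI n S f \<le> ereal (s / (1 - 2 * eps)) + ereal e" by simp
  qed
qed

end
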